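(* Let $a\neq 0$ be real and consider the characteristic equation $$\lambda^{2}-\varepsilon\lambda-\varepsilon a e^{-\lambda\tau}+1=0.$$ For $\varepsilon>0$ satisfying $$0<\varepsilon<\sqrt{2},\qquad \varepsilon|a|<1,\qquad \varepsilon^{2}+4a^{2}>4,\tag{H0}$$ define $$\omega_{1,2}=\omega_{1,2}(\varepsilon)=\frac{1}{\sqrt{2}}\Big(2-\varepsilon^{2}\pm\varepsilon\sqrt{\varepsilon^{2}-4+4a^{2}}\Big)^{1/2}\quad(\omega_1>\omega_2>0),$$ and, for $j=0,1,2,\dots$, $$\tau_{1,2}^{j}=\begin{cases}\dfrac{1}{\omega_{1,2}}\Big(\arccos\big(\tfrac{1-\omega_{1,2}^{2}}{\varepsilon a}\big)+2j\pi\Big), & a>0,\\[2mm] \dfrac{1}{\omega_{1,2}}\Big(2\pi-\arccos\big(\tfrac{1-\omega_{1,2}^{2}}{\varepsilon a}\big)+2j\pi\Big), & a<0.\end{cases}$$ Suppose there is $\varepsilon_0$ satisfying (H0) such that, with these quantities computed at $\varepsilon=\varepsilon_0$, $\tau_{1}^{m}=\tau_{2}^{n}=:\tau_0$ for some $m,n\in\mathbb{N}$. Then at $(\varepsilon,\tau)=(\varepsilon_0,\tau_0)$ the characteristic equation has two pairs of simple purely imaginary roots $\pm i\omega_1$ and $\pm i\omega_2$.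
   Context: This is the characteristic equation at the equilibrium $x=0$ of the delayed van der Pol oscillator $\ddot{x}(t)+\varepsilon(x^{2}(t)-1)\dot{x}(t)+x(t)=\varepsilon f(x(t-\tau))$, where $\varepsilon>0$, $\tau>0$, and $f$ is smooth near $0$ with $f(0)=f''(0)=0$, $f'(0)=a\neq0$. *)

theory Defs
  imports "HOL-Analysis.Analysis"
begin

definition char_fun :: "real \<Rightarrow> real \<Rightarrow> real \<Rightarrow> complex \<Rightarrow> complex" where
  "char_fun eps a tau z = z^2 - of_real eps * z - of_real (eps * a) * exp (- z * of_real tau) + 1"

definition H0 :: "real \<Rightarrow> real \<Rightarrow> bool" where
  "H0 eps a \<longleftrightarrow> 0 < eps \<and> eps < sqrt 2 \<and> eps * \<bar>a\<bar> < 1 \<and> eps^2 + 4 * a^2 > 4"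

definition omega1 :: "real \<Rightarrow> real \<Rightarrow> real" where
  "omega1 eps a = (1 / sqrt 2) * sqrt (2 - eps^2 + eps * sqrt (eps^2 - 4 + 4 * a^2))"

definition omega2 :: "real \<Rightarrow> real \<Rightarrow> real" where
  "omega2 eps a = (1 / sqrt 2) * sqrt (2 - eps^2 - eps * sqrt (eps^2 - 4 + 4 * a^2))"

definition tau_crit :: "real \<Rightarrow> real \<Rightarrow> real \<Rightarrow> nat \<Rightarrow> real" where
  "tau_crit eps a w j =
     (if a > 0 then (1 / w) * (arccos ((1 - w^2) / (eps * a)) + 2 * real j * pi)
      else (1 / w) * (2 * pi - arccos ((1 - w^2) / (eps * a)) + 2 * real j * pi))"

definition simple_root :: "(complex \<Rightarrow> complex) \<Rightarrow> complex \<Rightarrow> bool" where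
  "simple_root f z \<longleftrightarrow> f z = 0 \<and> deriv f z \<noteq> 0"

end

theory Submission
  imports Defs
begin

lemma sk0: "sin (real k * 2 * pi) = 0"
  using sin_2npi[of k] by (simp add: mult.commute mult.left_commute)
lemma ck1: "cos (real k * 2 * pi) = 1"
  using cos_2npi[of k] by (simp add: mult.commute mult.left_commute)

lemma trig_facts:
  fixes e a w j :: real and k :: nat
  assumes e: "e > 0" and a: "a \<noteq> 0" and w: "w > 0"
    and eq: "(1 - w^2)^2 + e^2 * w^2 = e^2 * a^2"
  shows "e * a * cos (w * tau_crit e a w k) = 1 - w^2 \<and> a * sin (w * tau_crit e a w k) = w"
proof -
  define c where "c = (1 - w^2) / (e * a)"
  have ea: "e * a \<noteq> 0" using e a by simp
  have c2: "1 - c^2 = (w / a)^2"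
  proof -
    have "c^2 = (1-w^2)^2 / (e^2 * a^2)" by (simp add: c_def power_divide power_mult_distrib)
    also have "... = (e^2*a^2 - e^2*w^2) / (e^2*a^2)" using eq by (simp add: algebra_simps)
    also have "... = 1 - (w/a)^2" using ea e a by (simp add: field_simps power_divide)
    finally show ?thesis by simp
  qed
  have cle: "c^2 \<le> 1" using c2 by (smt (verit) zero_le_power2)
  hence cb: "-1 \<le> c \<and> c \<le> 1" by (smt (verit) abs_le_square_iff power2_abs one_power2 abs_le_iff)
  have sq: "sqrt (1 - c^2) = \<bar>w / a\<bar>" using c2 by simp
  have wt: "w * tau_crit e a w k = (if a > 0 then arccos c + 2 * real k * pi
            else 2 * pi - arccos c + 2 * real k * pi)"
    using w by (simp add: tau_crit_def c_def)
  have cosv: "cos (w * tau_crit e a w k) = c"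
  proof (cases "a > 0")
    case True
    have "cos (arccos c + 2 * real k * pi) = cos (arccos c + real k * (2*pi))"
      by (simp add: algebra_simps)
    also have "... = cos (arccos c)" by (simp add: cos_add mult.assoc[symmetric] sk0 ck1)
    also have "... = c" using cb by simp
    finally show ?thesis using wt True by simp
  next
    case False
    have "cos (2 * pi - arccos c + 2 * real k * pi) = cos (- arccos c + real (Suc k) * 2 * pi)"
      by (simp add: algebra_simps)
    also have "... = cos (- arccos c)" by (simp add: cos_add cos_diff sk0 ck1 del: of_nat_Suc)
    also have "... = c" using cb by simp
    finally show ?thesis using wt False by simp
  qed
  have sinv: "a * sin (w * tau_crit e a w k) = w"
  proof (cases "a > 0")
    case True
    have "sin (arccos c + 2 * real k * pi) = sin (arccos c + real k * (2*pi))"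
      by (simp add: algebra_simps)
    also have "... = sin (arccos c)" by (simp add: sin_add mult.assoc[symmetric] sk0 ck1)
    also have "... = \<bar>w / a\<bar>" using sq sin_arccos cb by simp
    finally show ?thesis using wt True w by simp
  next
    case False
    have "sin (2 * pi - arccos c + 2 * real k * pi) = sin (- arccos c + real (Suc k) * 2 * pi)"
      by (simp add: algebra_simps)
    also have "... = sin (- arccos c)" by (simp add: sin_add sin_diff sk0 ck1 del: of_nat_Suc)
    also have "... = - \<bar>w / a\<bar>" using sq sin_arccos cb by simp
    finally show ?thesis using wt False w a by (simp add: abs_if divide_pos_neg)
  qed
  show ?thesis using cosv sinv ea by (simp add: c_def)
qed

lemma char_deriv:
  "(char_fun e a tau has_field_derivative (2*z - of_real e + of_real (e*a) * of_real tau * exp (- z * of_real tau))) (at z)"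
  unfolding char_fun_def
  by (auto intro!: derivative_eq_intros simp: algebra_simps)

lemma root_facts:
  fixes e a w tau :: real and s :: real
  assumes e: "e > 0" and w: "w > 0"
    and ec: "e * a * cos (w * tau) = 1 - w^2" and as: "a * sin (w * tau) = w"
    and ne: "2 * w^2 \<noteq> 2 - e^2" and s: "s = 1 \<or> s = -1"
  shows "simple_root (char_fun e a tau) (\<i> * of_real (s * w))"
proof -
  define th where "th = w * tau"
  have s2: "s * s = 1" using s by auto
  have ec': "e * a * cos th = 1 - w^2" and as': "a * sin th = w" using ec as th_def by auto
  have cs: "cos (s * w * tau) = cos th" "sin (s * w * tau) = s * sin th"
    using s th_def by auto
  have z: "char_fun e a tau (\<i> * of_real (s * w)) = 0"
  proof -
    have "Re (char_fun e a tau (\<i> * of_real (s * w))) = - (w^2) - e * a * cos th + 1"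
      using cs s2 by (simp add: char_fun_def Re_exp Im_exp power2_eq_square algebra_simps)
    moreover have "Im (char_fun e a tau (\<i> * of_real (s * w))) = s * (- e * w + e * a * sin th)"
      using cs s2 by (simp add: char_fun_def Re_exp Im_exp power2_eq_square algebra_simps)
    moreover have "e * a * sin th = e * w" using as' by (simp add: mult.assoc)
    ultimately show ?thesis using ec' by (simp add: complex_eq_iff)
  qed
  have d: "deriv (char_fun e a tau) (\<i> * of_real (s * w)) \<noteq> 0"
  proof
    assume 0: "deriv (char_fun e a tau) (\<i> * of_real (s * w)) = 0"
    have dv: "deriv (char_fun e a tau) (\<i> * of_real (s * w)) =
       2*(\<i> * of_real (s * w)) - of_real e + of_real (e*a) * of_real tau * exp (- (\<i> * of_real (s * w)) * of_real tau)"
      by (rule DERIV_imp_deriv[OF char_deriv])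
    have re: "Re (deriv (char_fun e a tau) (\<i> * of_real (s * w))) = - e + tau * (e * a * cos th)"
      unfolding dv using cs by (simp add: Re_exp Im_exp algebra_simps)
    have im: "Im (deriv (char_fun e a tau) (\<i> * of_real (s * w))) = s * (2 * w - e * tau * (a * sin th))"
      unfolding dv using cs s2 by (simp add: Re_exp Im_exp algebra_simps)
    have r1: "tau * (1 - w^2) = e" using re 0 ec' by simp
    have "2 * w - e * tau * w = 0" using im 0 as' s by auto
    hence "w * (2 - e * tau) = 0" by (simp add: algebra_simps)
    hence r2: "e * tau = 2" using w by simp
    have "e * (tau * (1 - w^2)) = e * e" using r1 by simp
    hence "2 * (1 - w^2) = e * e" using r2 by (simp add: mult.assoc[symmetric])
    thus False using ne by (simp add: power2_eq_square algebra_simps)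
  qed
  show ?thesis using z d by (simp add: simple_root_def)
qed

lemma wsq: assumes "X > 0" shows "(1 / sqrt 2) * sqrt X > 0 \<and> ((1 / sqrt 2) * sqrt X)^2 = X / 2"
  using assms by (simp add: power_mult_distrib power_divide)

lemma both:
  fixes e a w tau :: real and k :: nat
  assumes e: "e > 0" and a: "a \<noteq> 0" and w: "w > 0"
    and eq: "(1 - w^2)^2 + e^2 * w^2 = e^2 * a^2"
    and ne: "2 * w^2 \<noteq> 2 - e^2" and t: "tau_crit e a w k = tau"
  shows "simple_root (char_fun e a tau) (\<i> * of_real w) \<and> simple_root (char_fun e a tau) (- \<i> * of_real w)"
proof -
  have tf: "e * a * cos (w * tau) = 1 - w^2 \<and> a * sin (w * tau) = w"
    using trig_facts[OF e a w eq, of k] t by simp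
  have 1: "simple_root (char_fun e a tau) (\<i> * of_real (1 * w))"
    by (rule root_facts[OF e w]) (use tf ne in auto)
  have 2: "simple_root (char_fun e a tau) (\<i> * of_real ((-1) * w))"
    by (rule root_facts[OF e w]) (use tf ne in auto)
  show ?thesis using 1 2 by simp
qed

theorem lemma1:
  fixes a eps0 tau0 :: real and m n :: nat
  assumes "a \<noteq> 0"
    and "H0 eps0 a"
    and "tau_crit eps0 a (omega1 eps0 a) m = tau0"
    and "tau_crit eps0 a (omega2 eps0 a) n = tau0"
  shows "omega1 eps0 a > omega2 eps0 a \<and> omega2 eps0 a > 0 \<and>
         simple_root (char_fun eps0 a tau0) (\<i> * of_real (omega1 eps0 a)) \<and>
         simple_root (char_fun eps0 a tau0) (- \<i> * of_real (omega1 eps0 a)) \<and>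
         simple_root (char_fun eps0 a tau0) (\<i> * of_real (omega2 eps0 a)) \<and>
         simple_root (char_fun eps0 a tau0) (- \<i> * of_real (omega2 eps0 a))"
proof -
  define e where "e = eps0"
  define r where "r = sqrt (e^2 - 4 + 4 * a^2)"
  have e: "e > 0" and es: "e < sqrt 2" and ea: "e * \<bar>a\<bar> < 1" and D: "e^2 + 4 * a^2 > 4"
    using assms(2) by (auto simp: H0_def e_def)
  have "e^2 < (sqrt 2)^2" by (rule power_strict_mono) (use es e in auto)
  hence e2: "e^2 < 2" by simp
  have Dp: "e^2 - 4 + 4 * a^2 > 0" using D by simp
  have r: "r > 0" "r^2 = e^2 - 4 + 4 * a^2" using Dp by (auto simp: r_def)
  have "(e * \<bar>a\<bar>)^2 < 1^2" by (rule power_strict_mono) (use ea e in auto)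
  hence ea2: "e^2 * a^2 < 1" by (simp add: power_mult_distrib)
  have "(e * r)^2 < (2 - e^2)^2"
  proof -
    have "(e * r)^2 = e^2 * (e^2 - 4 + 4 * a^2)" using r by (simp add: power_mult_distrib)
    also have "... < (2 - e^2)^2" using ea2 by (simp add: power2_eq_square algebra_simps)
    finally show ?thesis .
  qed
  hence er: "e * r < 2 - e^2" by (rule power_less_imp_less_base) (use e2 in simp)
  define X1 where "X1 = 2 - e^2 + e * r"
  define X2 where "X2 = 2 - e^2 - e * r"
  have er0: "e * r > 0" using e r by simp
  have X: "X1 > 0" "X2 > 0" "X2 < X1" using er e2 er0 by (auto simp: X1_def X2_def)
  have o1: "omega1 eps0 a = (1 / sqrt 2) * sqrt X1" by (simp add: omega1_def X1_def r_def e_def)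
  have o2: "omega2 eps0 a = (1 / sqrt 2) * sqrt X2" by (simp add: omega2_def X2_def r_def e_def)
  have w1: "omega1 eps0 a > 0" "(omega1 eps0 a)^2 = X1 / 2" using wsq[OF X(1)] o1 by auto
  have w2: "omega2 eps0 a > 0" "(omega2 eps0 a)^2 = X2 / 2" using wsq[OF X(2)] o2 by auto
  have gt: "omega1 eps0 a > omega2 eps0 a" unfolding o1 o2 using X by (simp add: divide_strict_right_mono)
  have eq1: "(1 - X1/2)^2 + e^2 * (X1/2) = e^2 * a^2"
  proof -
    have "(1 - X1/2)^2 + e^2 * (X1/2) - e^2 * a^2 = e^2 * (r^2 - (e^2 - 4 + 4 * a^2)) / 4"
      unfolding X1_def by (simp add: field_simps power2_eq_square)
    thus ?thesis using r by simp
  qed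
  have eq2: "(1 - X2/2)^2 + e^2 * (X2/2) = e^2 * a^2"
  proof -
    have "(1 - X2/2)^2 + e^2 * (X2/2) - e^2 * a^2 = e^2 * (r^2 - (e^2 - 4 + 4 * a^2)) / 4"
      unfolding X2_def by (simp add: field_simps power2_eq_square)
    thus ?thesis using r by simp
  qed
  have ne1: "2 * (X1/2) \<noteq> 2 - e^2" using er0 e r by (simp add: X1_def)
  have ne2: "2 * (X2/2) \<noteq> 2 - e^2" using er0 e r by (simp add: X2_def)
  have B1: "simple_root (char_fun e a tau0) (\<i> * of_real (omega1 eps0 a)) \<and>
      simple_root (char_fun e a tau0) (- \<i> * of_real (omega1 eps0 a))"
    by (rule both[OF e assms(1) w1(1), of m]) (use w1 eq1 ne1 assms(3) e_def in auto)
  have B2: "simple_root (char_fun e a tau0) (\<i> * of_real (omega2 eps0 a)) \<and>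
      simple_root (char_fun e a tau0) (- \<i> * of_real (omega2 eps0 a))"
    by (rule both[OF e assms(1) w2(1), of n]) (use w2 eq2 ne2 assms(4) e_def in auto)
  show ?thesis using gt w2 B1 B2 e_def by simp
qed

end
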